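(* Let $f(a,b,c,d,e,x,y)$ be analytic in a neighbourhood of the origin of $\mathbb{C}^7$. Suppose that, with $F(X,Y)=f(a,b,c,d,e,X,Y)$, $f$ satisfies in a neighbourhood of the origin the equation $$x\Big\{F(x,y)-F(x,yq)-(d+e)q^{-1}\big[F(x,yq)-F(x,yq^2)\big]+de\,q^{-2}\big[F(x,yq^2)-F(x,yq^3)\big]\Big\}$$ $$=y\Big\{\big[F(x,y)-F(xq,y)\big]-(a+b+c)\big[F(x,yq)-F(xq,yq)\big]+(ab+ac+bc)\big[F(x,yq^2)-F(xq,yq^2)\big]-abc\big[F(x,yq^3)-F(xq,yq^3)\big]\Big\}.$$ Then, in some neighbourhood of the origin, $$f(a,b,c,d,e,x,y)=\mathbb{T}(a,b,c,d,e,yD_x)\{f(a,b,c,d,e,x,0)\}=\sum_{n\ge0}\frac{(a,b,c;q)_n}{(q,d,e;q)_n}\,y^n\,D_x^n\{f(a,b,c,d,e,x,0)\},$$ and the series converges there.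
   Context: Throughout, $0<q<1$. $(\alpha;q)_0=1$, $(\alpha;q)_n=\prod_{j=0}^{n-1}(1-\alpha q^j)$, and $(\alpha_1,\dots,\alpha_r;q)_n=\prod_i(\alpha_i;q)_n$. $D_x$ is the $q$-derivative acting on the variable $x$ with all other variables fixed: $D_x\{g(x)\}=\frac{g(x)-g(xq)}{x}$. For a function analytic at $0$, $D_x$ acts termwise on the power series, $D_x\{x^m\}=(1-q^m)x^{m-1}$, which gives the value at $x=0$ by continuity. The operator is $\mathbb{T}(a,b,c,d,e,yD_x)=\sum_{n\ge0}\frac{(a,b,c;q)_n}{(q,d,e;q)_n}(yD_x)^n$. *)

theory Defs
  imports "HOL-Analysis.Analysis"
begin

definition qpoch :: "complex \<Rightarrow> real \<Rightarrow> nat \<Rightarrow> complex" where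
  "qpoch \<alpha> q n = (\<Prod>j<n. 1 - \<alpha> * of_real q ^ j)"

definition qD :: "real \<Rightarrow> (complex \<Rightarrow> complex) \<Rightarrow> complex \<Rightarrow> complex" where
  "qD q g x = (if x = 0 then Lim (at 0) (\<lambda>t. (g t - g (of_real q * t)) / t)
               else (g x - g (of_real q * x)) / x)"

text \<open>Analyticity at the origin of C^n: in some polydisc around 0, g is the (unconditionally,
  hence absolutely) convergent sum of a power series in the n variables z 0, ..., z (n-1).\<close>
definition analytic_at_origin :: "nat \<Rightarrow> ((nat \<Rightarrow> complex) \<Rightarrow> complex) \<Rightarrow> bool" where
  "analytic_at_origin n g \<longleftrightarrow>
     (\<exists>r>0. \<exists>c :: (nat \<Rightarrow> nat) \<Rightarrow> complex. \<forall>z. (\<forall>i<n. norm (z i) < r) \<longrightarrow>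
        ((\<lambda>\<alpha>. c \<alpha> * (\<Prod>i<n. z i ^ \<alpha> i)) has_sum g z) {\<alpha>. \<forall>i\<ge>n. \<alpha> i = 0})"

definition analytic7 ::
  "(complex \<Rightarrow> complex \<Rightarrow> complex \<Rightarrow> complex \<Rightarrow> complex \<Rightarrow> complex \<Rightarrow> complex \<Rightarrow> complex) \<Rightarrow> bool" where
  "analytic7 f \<longleftrightarrow> analytic_at_origin 7 (\<lambda>z. f (z 0) (z 1) (z 2) (z 3) (z 4) (z 5) (z 6))"

end

theory Submission
  imports Defs
begin

lemma extract_rep:
  assumes "analytic7 f"
  obtains r0 and C :: "complex\<Rightarrow>complex\<Rightarrow>complex\<Rightarrow>complex\<Rightarrow>complex\<Rightarrow>nat\<Rightarrow>nat\<Rightarrow>complex"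
  where "r0 > 0" "\<And>a b c d e x y. norm a < r0 \<Longrightarrow> norm b < r0 \<Longrightarrow> norm c < r0 \<Longrightarrow> norm d < r0
     \<Longrightarrow> norm e < r0 \<Longrightarrow> norm x < r0 \<Longrightarrow> norm y < r0 \<Longrightarrow>
     ((\<lambda>p. C a b c d e (fst p) (snd p) * x^(snd p) * y^(fst p)) has_sum f a b c d e x y) UNIV"
proof -
  from assms obtain r0 cc where r0: "r0>0" and H: "\<And>z::nat\<Rightarrow>complex. (\<forall>i<7. norm (z i) < r0) \<Longrightarrow>
     ((\<lambda>\<alpha>. cc \<alpha> * (\<Prod>i<7. z i ^ \<alpha> i)) has_sum (f (z 0) (z 1) (z 2) (z 3) (z 4) (z 5) (z 6))) {\<alpha>. \<forall>i\<ge>7. \<alpha> i = 0}"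
    unfolding analytic7_def analytic_at_origin_def by blast
  define S where "S = {\<alpha>::nat\<Rightarrow>nat. \<forall>i\<ge>7. \<alpha> i = 0}"
  define w where "w a b c d e \<alpha> = a^\<alpha> 0 * b^\<alpha> 1 * c^\<alpha> 2 * d^\<alpha> 3 * e^\<alpha> 4"
    for a b c d e :: complex and \<alpha> :: "nat\<Rightarrow>nat"
  define C where "C a b c d e n m = infsum (\<lambda>\<alpha>. cc \<alpha> * w a b c d e \<alpha>) {\<alpha>\<in>S. \<alpha> 6 = n \<and> \<alpha> 5 = m}"
    for a b c d e :: complex and n m :: nat
  show thesis
  proof (rule that[of r0 C])
    show "r0 > 0" by (rule r0)
    fix a b c d e x y :: complex
    assume nm: "norm a < r0" "norm b < r0" "norm c < r0" "norm d < r0"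
     "norm e < r0" "norm x < r0" "norm y < r0"
    define z where "z = (\<lambda>i::nat. if i=0 then a else if i=1 then b else if i=2 then c else if i=3 then d
       else if i=4 then e else if i=5 then x else y)"
    have "\<forall>i<7. norm (z i) < r0"
    proof (intro allI impI)
      fix i :: nat assume "i < 7"
      then have "i=0 \<or> i=1 \<or> i=2 \<or> i=3 \<or> i=4 \<or> i=5 \<or> i=6" by auto
      then show "norm (z i) < r0" using nm by (auto simp: z_def)
    qed
    from H[OF this] have H1: "((\<lambda>\<alpha>. cc \<alpha> * w a b c d e \<alpha> * x^\<alpha> 5 * y^\<alpha> 6) has_sum f a b c d e x y) S"
      by (simp add: z_def S_def w_def eval_nat_numeral lessThan_Suc mult_ac)
    define \<phi> where "\<phi> = (\<lambda>(p::nat\<times>nat, \<alpha>::nat\<Rightarrow>nat). cc \<alpha> * w a b c d e \<alpha> * x^\<alpha> 5 * y^\<alpha> 6)"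
    define h where "h = (\<lambda>\<alpha>::nat\<Rightarrow>nat. ((\<alpha> 6, \<alpha> 5), \<alpha>))"
    have inj: "inj_on h S" by (auto simp: inj_on_def h_def)
    have img: "h ` S = Sigma UNIV (\<lambda>p. {\<alpha>\<in>S. \<alpha> 6 = fst p \<and> \<alpha> 5 = snd p})"
      by (auto simp: h_def image_iff)
    have "(\<phi> has_sum f a b c d e x y) (h ` S)"
      using has_sum_reindex[OF inj, of \<phi>] H1 by (simp add: \<phi>_def h_def o_def)
    hence Hs: "(\<phi> has_sum f a b c d e x y) (Sigma UNIV (\<lambda>p. {\<alpha>\<in>S. \<alpha> 6 = fst p \<and> \<alpha> 5 = snd p}))"
      using img by simp
    show "((\<lambda>p. C a b c d e (fst p) (snd p) * x^(snd p) * y^(fst p)) has_sum f a b c d e x y) UNIV"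
    proof (rule has_sum_SigmaD[OF Hs])
      fix p :: "nat\<times>nat"
      obtain n m where p: "p = (n,m)" by force
      let ?B = "{\<alpha>\<in>S. \<alpha> 6 = n \<and> \<alpha> 5 = m}"
      have sub: "?B \<subseteq> S" by auto
      have summ: "(\<lambda>\<alpha>. cc \<alpha> * w a b c d e \<alpha> * x^\<alpha> 5 * y^\<alpha> 6) summable_on ?B"
        using summable_on_subset_banach[OF has_sum_imp_summable[OF H1] sub] .
      have eqf: "\<And>\<alpha>. \<alpha>\<in>?B \<Longrightarrow> \<phi> (p,\<alpha>) = cc \<alpha> * w a b c d e \<alpha> * (x^m * y^n)"
        by (auto simp: \<phi>_def p)
      have eqf2: "\<And>\<alpha>. \<alpha>\<in>?B \<Longrightarrow> cc \<alpha> * w a b c d e \<alpha> * x^\<alpha> 5 * y^\<alpha> 6 = \<phi> (p,\<alpha>)"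
        by (auto simp: \<phi>_def p)
      have s2: "(\<lambda>\<alpha>. \<phi> (p,\<alpha>)) summable_on ?B"
        using summable_on_cong[of ?B "\<lambda>\<alpha>. cc \<alpha> * w a b c d e \<alpha> * x^\<alpha> 5 * y^\<alpha> 6" "\<lambda>\<alpha>. \<phi> (p,\<alpha>)"] eqf2 summ by blast
      have "infsum (\<lambda>\<alpha>. \<phi> (p,\<alpha>)) ?B = infsum (\<lambda>\<alpha>. cc \<alpha> * w a b c d e \<alpha> * (x^m * y^n)) ?B"
        using eqf by (rule infsum_cong)
      also have "\<dots> = C a b c d e n m * (x^m * y^n)"
        by (simp add: infsum_cmult_left' C_def)
      finally have "((\<lambda>\<alpha>. \<phi> (p,\<alpha>)) has_sum (C a b c d e n m * (x^m * y^n))) ?B"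
        using has_sum_infsum[OF s2] by simp
      then show "((\<lambda>\<alpha>. \<phi> (p, \<alpha>)) has_sum (C a b c d e (fst p) (snd p) * x^(snd p) * y^(fst p)))
          {\<alpha>\<in>S. \<alpha> 6 = fst p \<and> \<alpha> 5 = snd p}"
        by (simp add: p mult_ac)
    qed
  qed
qed


lemma rows_of:
  fixes C :: "nat \<Rightarrow> nat \<Rightarrow> complex"
  assumes H: "((\<lambda>p. C (fst p) (snd p) * x^(snd p) * y^(fst p)) has_sum g) UNIV"
  shows "(\<lambda>m. C n m * x^m * y^n) sums (infsum (\<lambda>m. C n m * x^m * y^n) UNIV)"
    and "((\<lambda>n. infsum (\<lambda>m. C n m * x^m * y^n) UNIV) has_sum g) UNIV"
proof -
  have H': "((\<lambda>(n,m). C n m * x^m * y^n) has_sum g) (Sigma UNIV (\<lambda>_. UNIV))"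
  proof -
    have "(\<lambda>(n,m). C n m * x^m * y^n) = (\<lambda>p. C (fst p) (snd p) * x^(snd p) * y^(fst p))"
      by (auto simp: fun_eq_iff)
    then show ?thesis using H by simp
  qed
  have rs: "(\<lambda>m. C n m * x^m * y^n) summable_on UNIV" for n
    using summable_on_SigmaD1[of "\<lambda>n m. C n m * x^m * y^n", OF has_sum_imp_summable[OF H']] by simp
  show "(\<lambda>m. C n m * x^m * y^n) sums (infsum (\<lambda>m. C n m * x^m * y^n) UNIV)"
    by (rule has_sum_imp_sums[OF has_sum_infsum[OF rs]])
  show "((\<lambda>n. infsum (\<lambda>m. C n m * x^m * y^n) UNIV) has_sum g) UNIV"
    by (rule has_sum_SigmaD[OF H']) (use has_sum_infsum[OF rs] in auto)
qed

lemma rep2: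
  assumes "analytic7 f"
  obtains r0 and C :: "complex\<Rightarrow>complex\<Rightarrow>complex\<Rightarrow>complex\<Rightarrow>complex\<Rightarrow>nat\<Rightarrow>nat\<Rightarrow>complex"
  where "r0 > 0"
   "\<And>a b c d e x n. norm a < r0 \<Longrightarrow> norm b < r0 \<Longrightarrow> norm c < r0 \<Longrightarrow> norm d < r0
     \<Longrightarrow> norm e < r0 \<Longrightarrow> norm x < r0 \<Longrightarrow> summable (\<lambda>m. C a b c d e n m * x^m)"
   "\<And>a b c d e x y. norm a < r0 \<Longrightarrow> norm b < r0 \<Longrightarrow> norm c < r0 \<Longrightarrow> norm d < r0
     \<Longrightarrow> norm e < r0 \<Longrightarrow> norm x < r0 \<Longrightarrow> norm y < r0 \<Longrightarrow>
     (\<lambda>n. (\<Sum>m. C a b c d e n m * x^m) * y^n) sums f a b c d e x y"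
proof -
  obtain r0 C where r0: "r0 > 0" and H: "\<And>a b c d e x y. norm a < r0 \<Longrightarrow> norm b < r0 \<Longrightarrow> norm c < r0 \<Longrightarrow> norm d < r0
     \<Longrightarrow> norm e < r0 \<Longrightarrow> norm x < r0 \<Longrightarrow> norm y < r0 \<Longrightarrow>
     ((\<lambda>p. C a b c d e (fst p) (snd p) * x^(snd p) * y^(fst p)) has_sum f a b c d e x y) UNIV"
    using extract_rep[OF assms] by blast
  have S: "summable (\<lambda>m. C a b c d e n m * x^m)"
    if nm: "norm a < r0" "norm b < r0" "norm c < r0" "norm d < r0" "norm e < r0" "norm x < r0" for a b c d e x n
  proof -
    define y0 :: complex where "y0 = of_real (r0/2)"
    have y0: "norm y0 < r0" "y0 \<noteq> 0" using r0 by (auto simp: y0_def)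
    have "summable (\<lambda>m. C a b c d e n m * x^m * y0^n)"
      using rows_of(1)[OF H[OF nm y0(1)]] by (rule sums_summable)
    then have "summable (\<lambda>m. C a b c d e n m * x^m * y0^n * (1/y0^n))"
      by (rule summable_mult2)
    then show ?thesis using y0 by simp
  qed
  show thesis
  proof (rule that[of r0 C, OF r0 S])
    fix a b c d e x y :: complex
    assume nm: "norm a < r0" "norm b < r0" "norm c < r0" "norm d < r0" "norm e < r0" "norm x < r0" "norm y < r0"
    have eq: "infsum (\<lambda>m. C a b c d e n m * x^m * y^n) UNIV = (\<Sum>m. C a b c d e n m * x^m) * y^n" for n
    proof -
      have "(\<lambda>m. C a b c d e n m * x^m * y^n) sums ((\<Sum>m. C a b c d e n m * x^m) * y^n)"
        by (rule sums_mult2[OF summable_sums[OF S[OF nm(1-6)]]])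
      then show ?thesis using rows_of(1)[OF H[OF nm]] sums_unique2 by blast
    qed
    show "(\<lambda>n. (\<Sum>m. C a b c d e n m * x^m) * y^n) sums f a b c d e x y"
      using has_sum_imp_sums[OF rows_of(2)[OF H[OF nm]]] by (simp add: eq)
  qed (auto)
qed

lemma powser_unique0:
  fixes u :: "nat \<Rightarrow> complex"
  assumes s: "s > 0" and sm: "\<And>y. norm y < s \<Longrightarrow> (\<lambda>n. u n * y^n) sums 0"
  shows "u n = 0"
proof (induction n rule: less_induct)
  case (less n)
  have hs: "(\<lambda>k. u (k+n) * y^k) sums 0" if y: "y \<noteq> 0" "norm y < s" for y
  proof -
    have "(\<lambda>i. u i * y^i) sums 0" using sm y by blast
    hence "(\<lambda>i. u (i+n) * y^(i+n)) sums 0"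
      using sums_zero_iff_shift[of n "\<lambda>i. u i * y^i" 0] less by simp
    hence "(\<lambda>i. (u (i+n) * y^(i+n)) * (1/y^n)) sums (0 * (1/y^n))" by (rule sums_mult2)
    thus ?thesis using y by (simp add: power_add)
  qed
  note L = powser_limit_0_strong[OF s, of "\<lambda>k. u (k+n)" "\<lambda>_. 0"]
  have "((\<lambda>_::complex. 0::complex) \<longlongrightarrow> u n) (at 0)"
    using L hs by simp
  from LIM_const_eq[OF this] show "u n = 0" by simp
qed

lemma one_minus_nz:
  fixes z :: complex
  assumes "norm z < 1" "0 \<le> q" "q \<le> 1"
  shows "1 - z * of_real q ^ k \<noteq> 0"
proof
  assume "1 - z * of_real q ^ k = 0"
  hence "z * of_real q ^ k = 1" by simp
  hence "norm (z * of_real q ^ k) = 1" by simp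
  moreover have "norm (z * of_real q ^ k) = norm z * q^k" using assms by (simp add: norm_mult norm_power)
  moreover have "q^k \<le> 1" using assms by (simp add: power_le_one)
  ultimately have "norm z * q^k = 1" by simp
  moreover have "norm z * q^k \<le> norm z" using \<open>q^k \<le> 1\<close> by (simp add: mult_left_le)
  ultimately show False using assms by simp
qed

lemma qpoch_Suc: "qpoch \<alpha> q (Suc n) = qpoch \<alpha> q n * (1 - \<alpha> * of_real q ^ n)"
  by (simp add: qpoch_def)

lemma qpoch_0[simp]: "qpoch \<alpha> q 0 = 1"
  by (simp add: qpoch_def)

lemma qpoch_nz:
  assumes "norm \<alpha> < 1" "0 \<le> q" "q \<le> 1"
  shows "qpoch \<alpha> q n \<noteq> 0"
  using one_minus_nz[OF assms] by (simp add: qpoch_def)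

lemma alg1:
  fixes Q W d e :: complex
  assumes "Q \<noteq> 0"
  shows "1 - Q*W - (d+e)/Q*(Q*W - (Q*W)^2) + d*e/Q^2*((Q*W)^2 - (Q*W)^3)
        = (1 - Q*W)*(1 - d*W)*(1 - e*W)"
  using assms by (simp add: field_simps power2_eq_square power3_eq_cube)


theorem theorem2:
  fixes f :: "complex \<Rightarrow> complex \<Rightarrow> complex \<Rightarrow> complex \<Rightarrow> complex \<Rightarrow> complex \<Rightarrow> complex \<Rightarrow> complex"
    and q :: real
  assumes q: "0 < q" "q < 1"
    and an: "analytic7 f"
    and eq: "\<exists>r>0. \<forall>a b c d e x y.
      norm a < r \<and> norm b < r \<and> norm c < r \<and> norm d < r \<and> norm e < r \<and> norm x < r \<and> norm y < r \<longrightarrow>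
      (let F = f a b c d e; Q = (of_real q :: complex) in
        x * ( F x y - F x (y*Q) - (d + e) / Q * (F x (y*Q) - F x (y*Q^2))
              + d * e / Q^2 * (F x (y*Q^2) - F x (y*Q^3)) )
      = y * ( (F x y - F (x*Q) y)
              - (a + b + c) * (F x (y*Q) - F (x*Q) (y*Q))
              + (a*b + a*c + b*c) * (F x (y*Q^2) - F (x*Q) (y*Q^2))
              - a*b*c * (F x (y*Q^3) - F (x*Q) (y*Q^3)) ))"
  shows "\<exists>r>0. \<forall>a b c d e x y.
      norm a < r \<and> norm b < r \<and> norm c < r \<and> norm d < r \<and> norm e < r \<and> norm x < r \<and> norm y < r \<longrightarrow>
      (\<lambda>n. qpoch a q n * qpoch b q n * qpoch c q n
              / (qpoch (of_real q) q n * qpoch d q n * qpoch e q n)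
            * y ^ n * ((qD q ^^ n) (\<lambda>t. f a b c d e t 0)) x)
      sums f a b c d e x y"
proof -
  obtain r0 C where r0: "r0 > 0" and
    SC: "\<And>a b c d e x n. norm a < r0 \<Longrightarrow> norm b < r0 \<Longrightarrow> norm c < r0 \<Longrightarrow> norm d < r0
     \<Longrightarrow> norm e < r0 \<Longrightarrow> norm x < r0 \<Longrightarrow> summable (\<lambda>m. C a b c d e n m * x^m)" and
    RC: "\<And>a b c d e x y. norm a < r0 \<Longrightarrow> norm b < r0 \<Longrightarrow> norm c < r0 \<Longrightarrow> norm d < r0
     \<Longrightarrow> norm e < r0 \<Longrightarrow> norm x < r0 \<Longrightarrow> norm y < r0 \<Longrightarrow>
     (\<lambda>n. (\<Sum>m. C a b c d e n m * x^m) * y^n) sums f a b c d e x y"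
    using rep2[OF an] by blast
  obtain r1 where r1: "r1 > 0" and E: "\<forall>a b c d e x y.
      norm a < r1 \<and> norm b < r1 \<and> norm c < r1 \<and> norm d < r1 \<and> norm e < r1 \<and> norm x < r1 \<and> norm y < r1 \<longrightarrow>
      (let F = f a b c d e; Q = (of_real q :: complex) in
        x * ( F x y - F x (y*Q) - (d + e) / Q * (F x (y*Q) - F x (y*Q^2))
              + d * e / Q^2 * (F x (y*Q^2) - F x (y*Q^3)) )
      = y * ( (F x y - F (x*Q) y)
              - (a + b + c) * (F x (y*Q) - F (x*Q) (y*Q))
              + (a*b + a*c + b*c) * (F x (y*Q^2) - F (x*Q) (y*Q^2))
              - a*b*c * (F x (y*Q^3) - F (x*Q) (y*Q^3)) ))"
    using eq by blast
  define R where "R = min r0 (min r1 1)"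
  have R: "R > 0" "R \<le> r0" "R \<le> r1" "R \<le> 1" using r0 r1 by (auto simp: R_def)
  show ?thesis
  proof (intro exI[of _ R] conjI allI impI)
    show "R > 0" by (rule R(1))
    fix a b c d e x y :: complex
    assume nm: "norm a < R \<and> norm b < R \<and> norm c < R \<and> norm d < R \<and> norm e < R \<and> norm x < R \<and> norm y < R"
    hence nma: "norm a < R" "norm b < R" "norm c < R" "norm d < R" "norm e < R" by auto
    define Q where "Q = (of_real q :: complex)"
    have Qn: "norm Q = q" using q by (simp add: Q_def)
    have Qnz: "Q \<noteq> 0" using q by (simp add: Q_def)
    define A where "A n t = (\<Sum>m. C a b c d e n m * t^m)" for n t
    have Rep: "(\<lambda>n. A n t * y^n) sums f a b c d e t y" if "norm t < R" "norm y < R" for t y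
      using RC[of a b c d e t y] nma that R unfolding A_def by auto
    have cont: "isCont (A n) 0" for n
    proof -
      have "summable (\<lambda>m. C a b c d e n m * (of_real (R/2))^m)"
        using SC[of a b c d e "of_real (R/2)" n] nma R by auto
      then have "isCont (\<lambda>t. \<Sum>m. C a b c d e n m * t^m) 0"
        by (rule isCont_powser) (use R in simp)
      then show ?thesis by (simp add: A_def[abs_def])
    qed
    define num where "num k = (1 - a*Q^k)*(1 - b*Q^k)*(1 - c*Q^k)" for k
    define den where "den k = (1 - Q^(Suc k))*(1 - d*Q^k)*(1 - e*Q^k)" for k
    have n1: "norm z < R \<Longrightarrow> 1 - z * Q^k \<noteq> 0" for z k
      using one_minus_nz[of z q k] q R unfolding Q_def by auto
    have num_nz: "num k \<noteq> 0" for k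
      using n1[of a k] n1[of b k] n1[of c k] nma by (simp add: num_def)
    have den_nz: "den k \<noteq> 0" for k
    proof -
      have "1 - Q * Q^k \<noteq> 0" using one_minus_nz[of Q q k] q Qn unfolding Q_def by auto
      then show ?thesis using n1[of d k] n1[of e k] nma by (simp add: den_def)
    qed
    have Qpow: "(Q^j)^n = (Q^n)^j" for j n :: nat
      by (simp add: power_mult[symmetric] mult.commute)
    have rec: "t * A (Suc k) t * den k = (A k t - A k (t*Q)) * num k" if t: "norm t < R" for t k
    proof -
      have tQ: "norm (t*Q) < R" using t q Qn
        by (simp add: norm_mult) (smt (verit) mult_left_le norm_ge_zero)
      have sF: "(\<lambda>n. A n s * (Q^j)^n * y^n) sums f a b c d e s (y*Q^j)"
        if "norm s < R" "norm y < R" for s y j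
      proof -
        have "norm (y*Q^j) \<le> norm y" using q Qn
          by (simp add: norm_mult norm_power mult_left_le power_le_one)
        then have "(\<lambda>n. A n s * (y*Q^j)^n) sums f a b c d e s (y*Q^j)"
          using Rep[of s "y*Q^j"] that by simp
        then show ?thesis by (simp add: power_mult_distrib mult_ac)
      qed
      define Lc where "Lc n = t * A n t * (1 - Q^n - (d+e)/Q*(Q^n - (Q^2)^n) + d*e/Q^2*((Q^2)^n - (Q^3)^n))" for n
      define Bc where "Bc n = (A n t - A n (t*Q)) * (1 - (a+b+c)*Q^n + (a*b+a*c+b*c)*(Q^2)^n - a*b*c*(Q^3)^n)" for n
      define u where "u n = Lc n - (if n = 0 then 0 else Bc (n-1))" for n
      have us: "(\<lambda>n. u n * y^n) sums 0" if y: "norm y < R" for y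
      proof -
        let ?F = "f a b c d e"
        have s0: "(\<lambda>n. A n t * y^n) sums ?F t y" by (rule Rep[OF t y])
        have s1: "(\<lambda>n. A n t * Q^n * y^n) sums ?F t (y*Q)" using sF[OF t y, of 1] by simp
        have s2: "(\<lambda>n. A n t * (Q^2)^n * y^n) sums ?F t (y*Q^2)" using sF[OF t y, of 2] by simp
        have s3: "(\<lambda>n. A n t * (Q^3)^n * y^n) sums ?F t (y*Q^3)" using sF[OF t y, of 3] by simp
        have g0: "(\<lambda>n. A n (t*Q) * y^n) sums ?F (t*Q) y" by (rule Rep[OF tQ y])
        have g1: "(\<lambda>n. A n (t*Q) * Q^n * y^n) sums ?F (t*Q) (y*Q)" using sF[OF tQ y, of 1] by simp
        have g2: "(\<lambda>n. A n (t*Q) * (Q^2)^n * y^n) sums ?F (t*Q) (y*Q^2)" using sF[OF tQ y, of 2] by simp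
        have g3: "(\<lambda>n. A n (t*Q) * (Q^3)^n * y^n) sums ?F (t*Q) (y*Q^3)" using sF[OF tQ y, of 3] by simp
        have L: "(\<lambda>n. t * (A n t * y^n - A n t * Q^n * y^n - (d+e)/Q * (A n t * Q^n * y^n - A n t * (Q^2)^n * y^n)
            + d*e/Q^2 * (A n t * (Q^2)^n * y^n - A n t * (Q^3)^n * y^n)))
          sums (t * (?F t y - ?F t (y*Q) - (d+e)/Q * (?F t (y*Q) - ?F t (y*Q^2))
            + d*e/Q^2 * (?F t (y*Q^2) - ?F t (y*Q^3))))"
          by (intro sums_mult sums_add sums_diff s0 s1 s2 s3)
        have L': "(\<lambda>n. Lc n * y^n)
          sums (t * (?F t y - ?F t (y*Q) - (d+e)/Q * (?F t (y*Q) - ?F t (y*Q^2))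
            + d*e/Q^2 * (?F t (y*Q^2) - ?F t (y*Q^3))))"
          using L by (simp add: Lc_def algebra_simps)
        have B: "(\<lambda>n. (A n t * y^n - A n (t*Q) * y^n) - (a+b+c) * (A n t * Q^n * y^n - A n (t*Q) * Q^n * y^n)
            + (a*b+a*c+b*c) * (A n t * (Q^2)^n * y^n - A n (t*Q) * (Q^2)^n * y^n)
            - a*b*c * (A n t * (Q^3)^n * y^n - A n (t*Q) * (Q^3)^n * y^n))
          sums ((?F t y - ?F (t*Q) y) - (a+b+c) * (?F t (y*Q) - ?F (t*Q) (y*Q))
            + (a*b+a*c+b*c) * (?F t (y*Q^2) - ?F (t*Q) (y*Q^2))
            - a*b*c * (?F t (y*Q^3) - ?F (t*Q) (y*Q^3)))" (is "_ sums ?Bv")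
          by (intro sums_mult sums_add sums_diff s0 s1 s2 s3 g0 g1 g2 g3)
        have B': "(\<lambda>n. Bc n * y^n) sums ?Bv"
          using B by (simp add: Bc_def algebra_simps)
        have "(\<lambda>n. y * (Bc n * y^n)) sums (y * ?Bv)" by (rule sums_mult[OF B'])
        hence "(\<lambda>n. (\<lambda>n. (if n = 0 then 0 else Bc (n-1)) * y^n) (Suc n)) sums (y * ?Bv)"
          by (simp add: mult_ac)
        hence R': "(\<lambda>n. (if n = 0 then 0 else Bc (n-1)) * y^n) sums (y * ?Bv)"
          by (subst (asm) sums_Suc_iff) simp
        have EE: "t * (?F t y - ?F t (y*Q) - (d+e)/Q * (?F t (y*Q) - ?F t (y*Q^2))
            + d*e/Q^2 * (?F t (y*Q^2) - ?F t (y*Q^3))) = y * ?Bv"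
          using E[rule_format, of a b c d e t y] nma t y R unfolding Q_def Let_def by auto
        have "(\<lambda>n. Lc n * y^n - (if n = 0 then 0 else Bc (n-1)) * y^n) sums (y * ?Bv - y * ?Bv)"
          using sums_diff[OF L' R'] EE by simp
        then show ?thesis by (simp add: u_def algebra_simps)
      qed
      have "u (Suc k) = 0" by (rule powser_unique0[OF R(1) us])
      hence "Lc (Suc k) = Bc k" by (simp add: u_def)
      moreover have "Lc (Suc k) = t * A (Suc k) t * den k"
        using alg1[OF Qnz, of "Q^k" d e] by (simp add: Lc_def den_def Qpow power_mult_distrib)
      moreover have "Bc k = (A k t - A k (t*Q)) * num k"
        by (simp add: Bc_def num_def Qpow algebra_simps power2_eq_square power3_eq_cube)
      ultimately show ?thesis by simp
    qed
    define P where "P n = qpoch a q n * qpoch b q n * qpoch c q n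
              / (qpoch (of_real q) q n * qpoch d q n * qpoch e q n)" for n
    have qnz: "qpoch \<alpha> q n \<noteq> 0" if "norm \<alpha> < R" for \<alpha> n
      using qpoch_nz[of \<alpha> q n] q R that by auto
    have qQ: "qpoch (of_real q) q n \<noteq> 0" for n
      using qpoch_nz[of "of_real q" q n] q by auto
    have P_nz: "P n \<noteq> 0" for n
      using qnz[of a n] qnz[of b n] qnz[of c n] qnz[of d n] qnz[of e n] qQ[of n] nma
      by (simp add: P_def)
    have P_Suc: "P (Suc n) = P n * (num n / den n)" for n
      unfolding P_def qpoch_Suc num_def den_def Q_def
      by (simp add: times_divide_times_eq mult_ac)
    define g0 where "g0 = (\<lambda>t. f a b c d e t 0)"
    have ind: "(qD q ^^ n) g0 t = A n t / P n" if "norm t < R" for n t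
      using that
    proof (induction n arbitrary: t)
      case 0
      have "(\<lambda>n. A n t * 0^n) sums f a b c d e t 0" using Rep[of t 0] 0 R by simp
      hence "A 0 t = f a b c d e t 0" by simp
      thus ?case by (simp add: g0_def P_def)
    next
      case (Suc n)
      define h where "h = (qD q ^^ n) g0"
      have key: "(h s - h (of_real q * s)) / s = A (Suc n) s / P (Suc n)" if s: "norm s < R" "s \<noteq> 0" for s
      proof -
        have sQ: "norm (of_real q * s) < R" using s q
          by (simp add: norm_mult) (smt (verit) mult_left_le_one_le norm_ge_zero)
        have h1: "h s = A n s / P n" using Suc.IH[OF s(1)] by (simp add: h_def)
        have h2: "h (of_real q * s) = A n (s*Q) / P n" using Suc.IH[OF sQ] by (simp add: h_def Q_def mult.commute)
        have r: "s * A (Suc n) s * den n = (A n s - A n (s*Q)) * num n" using rec[OF s(1)] .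
        have a: "A (Suc n) s = (A n s - A n (s*Q)) * num n / (s * den n)"
          using r den_nz[of n] s by (simp add: field_simps)
        show ?thesis unfolding h1 h2 P_Suc a
          using P_nz[of n] num_nz[of n] den_nz[of n] s by (simp add: field_simps)
      qed
      have hS: "(qD q ^^ Suc n) g0 t = qD q h t" by (simp add: h_def)
      show ?case
      proof (cases "t = 0")
        case False
        have "qD q h t = (h t - h (of_real q * t))/t" using False by (simp add: qD_def)
        then show ?thesis using key[OF Suc.prems False] hS by simp
      next
        case True
        have "((\<lambda>s. A (Suc n) s / P (Suc n)) \<longlongrightarrow> A (Suc n) 0 / P (Suc n)) (at 0)"
          using cont[of "Suc n"] P_nz[of "Suc n"] by (intro tendsto_divide tendsto_const) (simp_all add: isCont_def)
        then have "((\<lambda>s. (h s - h (of_real q * s))/s) \<longlongrightarrow> A (Suc n) 0 / P (Suc n)) (at 0)"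
          by (rule Lim_transform_within[OF _ R(1)]) (auto simp: key dist_norm)
        then have "Lim (at 0) (\<lambda>s. (h s - h (of_real q * s))/s) = A (Suc n) 0 / P (Suc n)"
          by (rule tendsto_Lim[rotated]) simp
        moreover have "qD q h t = Lim (at 0) (\<lambda>s. (h s - h (of_real q * s))/s)" using True by (simp add: qD_def)
        ultimately show ?thesis using True hS by simp
      qed
    qed
    have tm: "P n * y^n * (qD q ^^ n) g0 x = A n x * y^n" for n
      using ind[of x n] nm P_nz[of n] by simp
    have "(\<lambda>n. P n * y^n * (qD q ^^ n) g0 x) sums f a b c d e x y"
      using Rep[of x y] nm by (simp add: tm)
    then show "(\<lambda>n. qpoch a q n * qpoch b q n * qpoch c q n
              / (qpoch (of_real q) q n * qpoch d q n * qpoch e q n)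
            * y ^ n * ((qD q ^^ n) (\<lambda>t. f a b c d e t 0)) x)
      sums f a b c d e x y"
      unfolding P_def g0_def .
  qed
qed


end
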